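(* Let $F=(f_1,\dots,f_m)^\top$ satisfy the standing assumptions (A1)–(A3). Let $\gamma_0>0$, $x_0,x_1\in\mathbb R^n$, $\gamma(t)=\mu+(\gamma_0-\mu)e^{-t}$, and let $X,Z:[0,\infty)\to\mathbb R^n$ be locally absolutely continuous with $X(0)=x_0$, $Z(0)=x_0+x_1$, satisfying for almost every $t>0$ $$X'(t)=Z(t)-X(t),\qquad \gamma(t)Z'(t)\in\mu\big(X(t)-Z(t)\big)-\operatorname*{argmin}_{v\in C(X(t))}\langle X(t)-Z(t),v\rangle.$$ Let $\alpha:=F(x_0)+\frac{\gamma_0}{2}\|x_1\|^2\mathbf 1\in\mathbb R^m$, where $\mathbf 1=(1,\dots,1)^\top$. Then $S(\alpha)<\infty$ and for all $t>0$, $$u_0(X(t))\le e^{-t}\Big[u_0(x_0)+\gamma_0\|x_0+x_1\|^2+\gamma_0S(\alpha)^2\Big].$$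
   Context: Standing assumptions: (A1) each $f_j:\mathbb R^n\to\mathbb R$ is continuously differentiable, $\nabla f_j$ is $L_j$-Lipschitz, and $f_j$ is $\mu_j$-strongly convex, i.e. $f_j(z)\ge f_j(y)+\langle\nabla f_j(y),z-y\rangle+\frac{\mu_j}{2}\|z-y\|^2$, with $0\le\mu_j\le L_j<\infty$; $\mu:=\min_j\mu_j$, $L:=\max_jL_j$. (A2) There is $j_0$ such that every sublevel set $\{x: f_{j_0}(x)\le c\}$, $c\in\mathbb R$, is bounded. (A3) For every $x\in\mathbb R^n$ there exists $x^*\in\mathcal P_w$ with $F(x^* )\le F(x)$ (componentwise). Notation: $C(x)=\mathrm{conv}\{\nabla f_j(x)\}_{j=1}^m$; $\mathcal P_w$ is the set of weakly Pareto optimal points of $\min_xF(x)$ (no $y$ with $F(y)<F(x^* )$ componentwise); $\mathcal L_F(\alpha)=\{x:F(x)\le\alpha\}$; $f(x;z)=\min_j[f_j(x)-f_j(z)]$; $u_0(x)=\sup_{z\in\mathbb R^n}f(x;z)$; $S(\alpha)=\sup_{F^*\in F(\mathcal P_w\cap\mathcal L_F(\alpha))}\inf_{z\in F^{-1}(F^* )}\|z\|$. *)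

theory Defs
  imports "HOL-Analysis.Analysis"
begin

definition absolutely_continuous_on :: "real set \<Rightarrow> (real \<Rightarrow> 'b::real_normed_vector) \<Rightarrow> bool" where
  "absolutely_continuous_on S f \<longleftrightarrow>
     (\<forall>\<epsilon>>0. \<exists>\<delta>>0. \<forall>(N::nat) (a::nat \<Rightarrow> real) b.
        (\<forall>k<N. a k \<le> b k \<and> {a k..b k} \<subseteq> S) \<and>
        disjoint_family_on (\<lambda>k. {a k<..<b k}) {..<N} \<and>
        (\<Sum>k<N. b k - a k) < \<delta> \<longrightarrow>
        (\<Sum>k<N. norm (f (b k) - f (a k))) < \<epsilon>)"

definition loc_abs_cont_nonneg :: "(real \<Rightarrow> 'b::real_normed_vector) \<Rightarrow> bool" where
  "loc_abs_cont_nonneg f \<longleftrightarrow> (\<forall>T\<ge>0. absolutely_continuous_on {0..T} f)"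

definition weak_pareto :: "('i \<Rightarrow> 'a \<Rightarrow> real) \<Rightarrow> 'a set" where
  "weak_pareto f = {xs. \<not> (\<exists>y. \<forall>j. f j y < f j xs)}"

definition level_set :: "('i \<Rightarrow> 'a \<Rightarrow> real) \<Rightarrow> ('i \<Rightarrow> real) \<Rightarrow> 'a set" where
  "level_set f \<alpha> = {x. \<forall>j. f j x \<le> \<alpha> j}"

definition merit :: "('i::finite \<Rightarrow> 'a \<Rightarrow> real) \<Rightarrow> 'a \<Rightarrow> 'a \<Rightarrow> real" where
  "merit f x z = Min (range (\<lambda>j. f j x - f j z))"

definition u0 :: "('i::finite \<Rightarrow> 'a \<Rightarrow> real) \<Rightarrow> 'a \<Rightarrow> ereal" where
  "u0 f x = (SUP z. ereal (merit f x z))"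

definition S_fun :: "('i \<Rightarrow> 'a::real_normed_vector \<Rightarrow> real) \<Rightarrow> ('i \<Rightarrow> real) \<Rightarrow> ereal" where
  "S_fun f \<alpha> = (SUP Fs \<in> (\<lambda>x j. f j x) ` (weak_pareto f \<inter> level_set f \<alpha>).
                  (INF z \<in> {z. (\<lambda>j. f j z) = Fs}. ereal (norm z)))"

end

theory Submission
  imports Defs
begin

lemma ac_mono:
  fixes \<phi> :: "real \<Rightarrow> real"
  assumes ab: "a \<le> b" and ac: "absolutely_continuous_on {a..b} \<phi>"
    and good: "AE t in lborel. a < t \<and> t < b \<longrightarrow> (\<forall>\<epsilon>>0. \<exists>d>0. \<forall>u w. t - d < u \<longrightarrow> u \<le> t \<longrightarrow> t \<le> w \<longrightarrow> w < t + d \<longrightarrow> \<phi> w - \<phi> u \<le> \<epsilon> * (w - u))"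
  shows "\<phi> b \<le> \<phi> a"
proof -
  have key: "\<phi> b - \<phi> a \<le> \<epsilon> * (b - a) + \<eta>" if \<epsilon>: "\<epsilon> > 0" and \<eta>: "\<eta> > 0" for \<epsilon> \<eta>
  proof -
    obtain \<delta> where \<delta>: "\<delta> > 0" and ac\<delta>: "\<And>(N::nat) A B. (\<forall>k<N. A k \<le> B k \<and> {A k..B k} \<subseteq> {a..b}) \<and>
        disjoint_family_on (\<lambda>k. {A k<..<B k}) {..<N} \<and> (\<Sum>k<N. B k - A k) < \<delta> \<Longrightarrow>
        (\<Sum>k<N. norm (\<phi> (B k) - \<phi> (A k))) < \<eta>"
      using ac \<eta> unfolding absolutely_continuous_on_def by meson
    from good obtain N where N: "{t \<in> space lborel. \<not> (a < t \<and> t < b \<longrightarrow> (\<forall>\<epsilon>>0. \<exists>d>0. \<forall>u w. t - d < u \<longrightarrow> u \<le> t \<longrightarrow> t \<le> w \<longrightarrow> w < t + d \<longrightarrow> \<phi> w - \<phi> u \<le> \<epsilon> * (w - u)))} \<subseteq> N"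
      "emeasure lborel N = 0" "N \<in> sets lborel" by (rule AE_E)
    have "N \<in> null_sets lborel" using N by auto
    then have negN: "negligible (N \<union> {a,b})"
      by (metis negligible_Un negligible_iff_null_sets negligible_insert negligible_empty null_sets_completionI)
    then have Nleb: "N \<union> {a,b} \<in> sets lebesgue" "N \<union> {a,b} \<in> lmeasurable"
      using negligible_imp_measurable[OF negN] by (auto dest: fmeasurableD)
    obtain U where U: "open U" "N \<union> {a,b} \<subseteq> U" "U - (N \<union> {a,b}) \<in> lmeasurable"
      "emeasure lebesgue (U - (N \<union> {a,b})) < ennreal \<delta>"
      using sets_lebesgue_outer_open[OF Nleb(1) \<delta>] by blast
    have Ueq: "U = (U - (N \<union> {a,b})) \<union> (N \<union> {a,b})" using U(2) by blast
    have Ulm: "U \<in> lmeasurable"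
      using fmeasurable.Un[OF U(3) Nleb(2)] Ueq by simp
    have "measure lebesgue U \<le> measure lebesgue (U - (N \<union> {a,b})) + measure lebesgue (N \<union> {a,b})"
      by (subst Ueq) (rule measure_Un_le, use U Nleb in auto)
    also have "measure lebesgue (N \<union> {a,b}) = 0"
      using negN negligible_iff_measure by blast
    also have "measure lebesgue (U - (N \<union> {a,b})) < \<delta>"
      using U(3,4) \<delta> by (simp add: emeasure_eq_measure2 ennreal_less_iff)
    finally have Umeas: "measure lebesgue U < \<delta>" by simp
    define Q where "Q t d \<longleftrightarrow> d > 0 \<and> (\<forall>u w. t - d < u \<longrightarrow> u \<le> t \<longrightarrow> t \<le> w \<longrightarrow> w < t + d \<longrightarrow> \<phi> w - \<phi> u \<le> \<epsilon> * (w - u))" for t d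
    define r where "r t = (if t \<in> U then (SOME r. r > 0 \<and> ball t r \<subseteq> U) else if a < t \<and> t < b then (SOME d. Q t d) else 1)" for t
    have rU: "r t > 0 \<and> ball t (r t) \<subseteq> U" if "t \<in> U" for t
    proof -
      have "\<exists>r. r > 0 \<and> ball t r \<subseteq> U" using U(1) that open_contains_ball by blast
      from someI_ex[OF this] show ?thesis unfolding r_def using that by simp
    qed
    have rQ: "Q t (r t)" if "t \<notin> U" "a < t" "t < b" for t
    proof -
      have "t \<notin> N" using that U(2) by blast
      then have "t \<notin> {t \<in> space lborel. \<not> (a < t \<and> t < b \<longrightarrow> (\<forall>\<epsilon>>0. \<exists>d>0. \<forall>u w. t - d < u \<longrightarrow> u \<le> t \<longrightarrow> t \<le> w \<longrightarrow> w < t + d \<longrightarrow> \<phi> w - \<phi> u \<le> \<epsilon> * (w - u)))}"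
        using N(1) by blast
      then have "\<exists>d. Q t d" using that \<epsilon> unfolding Q_def by simp meson
      from someI_ex[OF this] show ?thesis unfolding r_def using that by simp
    qed
    have rpos: "\<forall>t. 0 < r t"
    proof
      fix t show "0 < r t"
        using rU[of t] rQ[of t] unfolding Q_def by (auto simp: r_def)
    qed
    obtain p where p: "p tagged_division_of {a..b}" "(\<lambda>t. ball t (r t)) fine p"
      using fine_division_exists_real[OF gauge_ball_dependent[OF rpos]] by blast
    have pfin: "finite p" using p(1) by blast
    have Kform: "\<exists>u w. K = {u..w} \<and> u \<le> x \<and> x \<le> w \<and> {u..w} \<subseteq> {a..b} \<and> {u..w} \<subseteq> ball x (r x)" if xKin: "(x,K) \<in> p" for x K
    proof -
      obtain u w where "K = cbox u w" using tagged_division_ofD(4)[OF p(1) xKin] by blast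
      moreover have "x \<in> K" "K \<subseteq> {a..b}" using tagged_division_ofD(2,3)[OF p(1) xKin] by auto
      moreover have "K \<subseteq> ball x (r x)" using p(2) xKin by (auto simp: fine_def)
      ultimately show ?thesis by auto
    qed
    define g where "g = (\<lambda>(x::real, K::real set). \<phi> (Sup K) - \<phi> (Inf K))"
    have tot: "\<phi> b - \<phi> a = sum g p"
      using additive_tagged_division_1[OF ab p(1), of \<phi>] by (simp add: g_def)
    define p1 where "p1 = p \<inter> {xk. fst xk \<in> U}"
    have split: "sum g p = sum g p1 + sum g (p - {xk. fst xk \<in> U})"
      unfolding p1_def by (rule sum.Int_Diff[OF pfin])
    have p2: "sum g (p - {xk. fst xk \<in> U}) \<le> \<epsilon> * (b - a)"
    proof -
      have "sum g (p - {xk. fst xk \<in> U}) \<le> sum (\<lambda>(x,K). \<epsilon> * measure lborel K) (p - {xk. fst xk \<in> U})"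
      proof (rule sum_mono)
        fix xk assume xk: "xk \<in> p - {xk. fst xk \<in> U}"
        obtain x K where xkK: "xk = (x,K)" by fastforce
        with xk have xK: "(x,K) \<in> p" "x \<notin> U" by auto
        obtain u w where uw: "K = {u..w}" "u \<le> x" "x \<le> w" "{u..w} \<subseteq> {a..b}" "{u..w} \<subseteq> ball x (r x)"
          using Kform[OF xK(1)] by blast
        have "a \<noteq> x" "b \<noteq> x" using xK(2) U(2) by auto
        with uw have axb: "a < x" "x < b" by auto
        have Q: "Q x (r x)" using rQ[OF xK(2) axb] .
        have "u \<in> {u..w}" "w \<in> {u..w}" using uw by auto
        then have "u \<in> ball x (r x)" "w \<in> ball x (r x)" using uw(5) by blast+
        then have "x - r x < u" "w < x + r x" by (auto simp: dist_real_def)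
        then have "\<phi> w - \<phi> u \<le> \<epsilon> * (w - u)" using Q uw unfolding Q_def by blast
        then show "g xk \<le> (\<lambda>(x,K). \<epsilon> * measure lborel K) xk" using uw xkK by (simp add: g_def)
      qed
      also have "\<dots> \<le> sum (\<lambda>(x,K). \<epsilon> * measure lborel K) p"
        by (rule sum_mono2[OF pfin]) (use \<epsilon> in auto)
      also have "\<dots> = \<epsilon> * sum (\<lambda>(x,K). measure lborel K) p"
        by (simp add: sum_distrib_left case_prod_unfold)
      also have "sum (\<lambda>(x,K). measure lborel K) p = b - a"
        using additive_content_tagged_division[of p a b] p(1) ab by simp
      finally show ?thesis .
    qed
    have p1: "sum g p1 < \<eta>"
    proof -
      have p1fin: "finite p1" using pfin p1_def by simp
      obtain h where h: "bij_betw h {0..<card p1} p1" using ex_bij_betw_nat_finite[OF p1fin] by blast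
      define n where "n = card p1"
      define A where "A k = Inf (snd (h k))" for k
      define B where "B k = Sup (snd (h k))" for k
      have hk: "h k \<in> p1" if "k < n" for k using h that unfolding n_def bij_betw_def by auto
      have AB: "snd (h k) = {A k..B k} \<and> A k \<le> B k \<and> {A k..B k} \<subseteq> {a..b} \<and> {A k..B k} \<subseteq> U" if "k < n" for k
      proof -
        obtain x K where xK: "h k = (x,K)" by fastforce
        have xKp: "(x,K) \<in> p" "x \<in> U" using hk[OF that] xK p1_def by auto
        obtain u w where uw: "K = {u..w}" "u \<le> x" "x \<le> w" "{u..w} \<subseteq> {a..b}" "{u..w} \<subseteq> ball x (r x)"
          using Kform[OF xKp(1)] by blast
        have "ball x (r x) \<subseteq> U" using rU[OF xKp(2)] by blast
        then show ?thesis using uw xK by (auto simp: A_def B_def)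
      qed
      have disj: "disjoint_family_on (\<lambda>k. {A k<..<B k}) {..<n}"
        unfolding disjoint_family_on_def
      proof (intro ballI impI)
        fix k l assume kl: "k \<in> {..<n}" "l \<in> {..<n}" "k \<noteq> l"
        have "h k \<noteq> h l" using h kl unfolding bij_betw_def inj_on_def n_def by auto
        moreover have "h k \<in> p" "h l \<in> p" using hk kl p1_def by auto
        ultimately have "interior (snd (h k)) \<inter> interior (snd (h l)) = {}"
          using tagged_division_ofD(5)[OF p(1), of "fst (h k)" "snd (h k)" "fst (h l)" "snd (h l)"] by auto
        then show "{A k<..<B k} \<inter> {A l<..<B l} = {}" using AB kl by auto
      qed
      have "(\<Sum>k<n. B k - A k) = (\<Sum>k<n. measure lebesgue {A k<..<B k})"
        using AB by (intro sum.cong) auto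
      also have "\<dots> = measure lebesgue (\<Union>k\<in>{..<n}. {A k<..<B k})"
        by (rule measure_finite_Union[symmetric]) (use disj AB in \<open>auto simp: emeasure_lborel_Ioo\<close>)
      also have "\<dots> \<le> measure lebesgue U"
        by (rule measure_mono_fmeasurable) (use AB Ulm in force)+
      finally have "(\<Sum>k<n. B k - A k) < \<delta>" using Umeas by simp
      then have "(\<Sum>k<n. norm (\<phi> (B k) - \<phi> (A k))) < \<eta>"
        using ac\<delta>[of n A B] AB disj by auto
      moreover have "sum g p1 = (\<Sum>k<n. \<phi> (B k) - \<phi> (A k))"
      proof -
        have "sum g p1 = sum (g \<circ> h) {0..<card p1}"
          using sum.reindex_bij_betw[OF h, of g] by simp
        also have "\<dots> = (\<Sum>k<n. \<phi> (B k) - \<phi> (A k))"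
          by (simp add: n_def lessThan_atLeast0 A_def B_def g_def case_prod_unfold)
        finally show ?thesis .
      qed
      moreover have "(\<Sum>k<n. \<phi> (B k) - \<phi> (A k)) \<le> (\<Sum>k<n. norm (\<phi> (B k) - \<phi> (A k)))"
        by (intro sum_mono) auto
      ultimately show ?thesis by linarith
    qed
    show ?thesis using tot split p1 p2 by linarith
  qed
  show ?thesis
  proof (rule field_le_epsilon[of "\<phi> b" "\<phi> a", THEN order_trans[OF _ order_refl]])
    fix e :: real assume e: "e > 0"
    define \<epsilon> where "\<epsilon> = e / (2 * (b - a + 1))"
    have \<epsilon>: "\<epsilon> > 0" using e ab by (simp add: \<epsilon>_def)
    have "\<epsilon> * (b - a) \<le> e / 2"
    proof -
      have "\<epsilon> * (b - a) \<le> \<epsilon> * (b - a + 1)" using \<epsilon> by simp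
      also have "\<dots> = e / 2" using ab by (simp add: \<epsilon>_def field_simps)
      finally show ?thesis .
    qed
    then show "\<phi> b \<le> \<phi> a + e" using key[OF \<epsilon>, of "e/2"] e by linarith
  qed
qed

lemma ac_cont:
  fixes f :: "real \<Rightarrow> 'b::real_normed_vector"
  assumes "absolutely_continuous_on {a..b} f"
  shows "continuous_on {a..b} f"
  unfolding continuous_on_iff
proof (intro ballI allI impI)
  fix x e assume x: "x \<in> {a..b}" and e: "(0::real) < e"
  obtain d where d: "d > 0" and H: "\<And>(N::nat) A B. (\<forall>k<N. A k \<le> B k \<and> {A k..B k} \<subseteq> {a..b}) \<and>
        disjoint_family_on (\<lambda>k. {A k<..<B k}) {..<N} \<and> (\<Sum>k<N. B k - A k) < d \<Longrightarrow>
        (\<Sum>k<N. norm (f (B k) - f (A k))) < e"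
    using assms e unfolding absolutely_continuous_on_def by meson
  show "\<exists>d>0. \<forall>x'\<in>{a..b}. dist x' x < d \<longrightarrow> dist (f x') (f x) < e"
  proof (intro exI[of _ d] conjI ballI impI d)
    fix y assume y: "y \<in> {a..b}" "dist y x < d"
    have "max x y - min x y < d" using y(2) by (auto simp: dist_real_def)
    then have "norm (f (max x y) - f (min x y)) < e"
      using H[of 1 "\<lambda>_. min x y" "\<lambda>_. max x y"] x y(1) by (auto simp: disjoint_family_on_def)
    then show "dist (f y) (f x) < e"
      by (cases "x \<le> y") (auto simp: dist_norm norm_minus_commute max_def min_def)
  qed
qed

lemma ac_bounded:
  fixes f :: "real \<Rightarrow> 'b::real_normed_vector"
  assumes "absolutely_continuous_on {a..b} f"
  obtains B where "B \<ge> 0" "\<And>s. s \<in> {a..b} \<Longrightarrow> norm (f s) \<le> B"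
proof -
  have "compact (f ` {a..b})"
    using compact_continuous_image[OF ac_cont[OF assms]] by simp
  then obtain B where "B > 0" "\<forall>x\<in>f ` {a..b}. norm x \<le> B"
    using compact_imp_bounded bounded_pos by metis
  then show ?thesis using that[of B] by auto
qed

lemma min_delta_finite:
  assumes "finite I" "\<forall>j\<in>I. \<exists>d>0. P j d" "\<And>j d d'. P j d \<Longrightarrow> 0 < d' \<Longrightarrow> d' \<le> d \<Longrightarrow> P j d'"
  shows "\<exists>d>(0::real). \<forall>j\<in>I. P j d"
proof -
  obtain D where D: "\<forall>j\<in>I. D j > 0 \<and> P j (D j)" using assms(2) by metis
  define d where "d = Min (insert 1 (D ` I))"
  have "d > 0" unfolding d_def using D assms(1) by (subst Min_gr_iff) auto
  moreover have "d \<le> D j" if "j \<in> I" for j unfolding d_def using that assms(1) by (intro Min_le) auto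
  ultimately show ?thesis using D assms(3) by blast
qed

lemma ac_dom_fin:
  fixes F :: "'i \<Rightarrow> real \<Rightarrow> 'b::real_normed_vector" and H :: "real \<Rightarrow> 'c::real_normed_vector"
  assumes I: "finite I" and acF: "\<And>j. j \<in> I \<Longrightarrow> absolutely_continuous_on S (F j)" and K: "K \<ge> 0"
    and dom: "\<And>s t. s \<in> S \<Longrightarrow> t \<in> S \<Longrightarrow> norm (H t - H s) \<le> K * (\<Sum>j\<in>I. norm (F j t - F j s))"
  shows "absolutely_continuous_on S H"
  unfolding absolutely_continuous_on_def
proof (intro allI impI)
  fix e :: real assume e: "e > 0"
  define e' where "e' = e / ((K + 1) * (card I + 1))"
  have e': "e' > 0" using e K by (simp add: e'_def)
  define P where "P j d \<longleftrightarrow> (\<forall>(N::nat) (A::nat\<Rightarrow>real) B. (\<forall>k<N. A k \<le> B k \<and> {A k..B k} \<subseteq> S) \<and>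
        disjoint_family_on (\<lambda>k. {A k<..<B k}) {..<N} \<and> (\<Sum>k<N. B k - A k) < d \<longrightarrow>
        (\<Sum>k<N. norm (F j (B k) - F j (A k))) < e')" for j d
  have "\<forall>j\<in>I. \<exists>d>0. P j d" using acF e' unfolding absolutely_continuous_on_def P_def by blast
  moreover have "P j d'" if "P j d" "0 < d'" "d' \<le> d" for j d d'
    using that unfolding P_def by (meson order_less_le_trans)
  ultimately obtain d where d: "d > 0" "\<forall>j\<in>I. P j d" using min_delta_finite[OF I, of P] by blast
  have main: "(\<Sum>k<N. norm (H (B k) - H (A k))) < e" if prem: "(\<forall>k<N. A k \<le> B k \<and> {A k..B k} \<subseteq> S) \<and>
        disjoint_family_on (\<lambda>k. {A k<..<B k}) {..<N} \<and> (\<Sum>k<N. B k - A k) < d" for N :: nat and A B :: "nat \<Rightarrow> real"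
  proof -
    have each: "(\<Sum>k<N. norm (F j (B k) - F j (A k))) < e'" if "j \<in> I" for j
      using d(2) that prem unfolding P_def by blast
    have lt: "K * card I * e' < e"
    proof -
      have "K * card I * e' \<le> (K + 1) * (card I + 1) * e'"
        using K e' by (intro mult_right_mono mult_mono) auto
      also have "\<dots> = e" using K by (simp add: e'_def)
      finally have "K * card I * e' \<le> e" .
      moreover have "K * card I * e' < (K + 1) * (card I + 1) * e'"
      proof (rule mult_strict_right_mono[OF _ e'])
        have "0 \<le> real (card I)" by simp
        then show "K * card I < (K + 1) * (card I + 1)" using K by (simp add: algebra_simps)
      qed
      ultimately show ?thesis using \<open>(K + 1) * (card I + 1) * e' = e\<close> by linarith
    qed
    have "(\<Sum>k<N. norm (H (B k) - H (A k))) \<le> (\<Sum>k<N. K * (\<Sum>j\<in>I. norm (F j (B k) - F j (A k))))"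
    proof (rule sum_mono)
      fix k assume "k \<in> {..<N}"
      then have "A k \<le> B k" "{A k..B k} \<subseteq> S" using prem by auto
      then have "A k \<in> S" "B k \<in> S" by auto
      then show "norm (H (B k) - H (A k)) \<le> K * (\<Sum>j\<in>I. norm (F j (B k) - F j (A k)))" by (rule dom)
    qed
    also have "\<dots> = K * (\<Sum>j\<in>I. \<Sum>k<N. norm (F j (B k) - F j (A k)))"
      by (simp add: sum_distrib_left sum.swap[of _ I])
    also have "\<dots> \<le> K * (\<Sum>j\<in>I. e')"
      using each K by (intro mult_left_mono sum_mono) (auto intro: less_imp_le)
    also have "\<dots> = K * card I * e'" by simp
    also have "\<dots> < e" by (rule lt)
    finally have XX: "(\<Sum>k<N. norm (H (B k) - H (A k))) < e" by this
    then show ?thesis .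
  qed
  show "\<exists>\<delta>>0. \<forall>(N::nat) A B. (\<forall>k<N. A k \<le> B k \<and> {A k..B k} \<subseteq> S) \<and>
        disjoint_family_on (\<lambda>k. {A k<..<B k}) {..<N} \<and> (\<Sum>k<N. B k - A k) < \<delta> \<longrightarrow>
        (\<Sum>k<N. norm (H (B k) - H (A k))) < e"
    by (intro exI[of _ d] conjI allI impI d(1)) (erule main)
qed

lemma ac_dom2:
  fixes F :: "real \<Rightarrow> 'b::real_normed_vector" and G :: "real \<Rightarrow> 'c::real_normed_vector"
    and H :: "real \<Rightarrow> 'd::real_normed_vector"
  assumes acF: "absolutely_continuous_on S F" and acG: "absolutely_continuous_on S G" and K: "K \<ge> 0"
    and dom: "\<And>s t. s \<in> S \<Longrightarrow> t \<in> S \<Longrightarrow> norm (H t - H s) \<le> K * (norm (F t - F s) + norm (G t - G s))"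
  shows "absolutely_continuous_on S H"
proof -
  have 1: "absolutely_continuous_on S (\<lambda>t. (F t, 0::'c))"
    by (rule ac_dom_fin[where I="{()}" and F="\<lambda>_. F" and K=1]) (auto simp: acF norm_Pair)
  have 2: "absolutely_continuous_on S (\<lambda>t. (0::'b, G t))"
    by (rule ac_dom_fin[where I="{()}" and F="\<lambda>_. G" and K=1]) (auto simp: acG norm_Pair)
  show ?thesis
  proof (rule ac_dom_fin[where I="{True, False}" and F="\<lambda>b t. if b then (F t, 0) else (0, G t)" and K=K])
    fix j :: bool show "absolutely_continuous_on S (\<lambda>t. if j then (F t, 0) else (0, G t))"
      using 1 2 by (cases j) simp_all
  qed (use K dom in \<open>auto simp: norm_Pair\<close>)
qed

lemma ac_id: "absolutely_continuous_on S (\<lambda>t::real. t)"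
  unfolding absolutely_continuous_on_def
proof (intro allI impI)
  fix e :: real assume e: "e > 0"
  have "(\<Sum>k<N. norm (B k - A k)) < e" if "(\<forall>k<N. A k \<le> B k \<and> {A k..B k} \<subseteq> S)" "(\<Sum>k<N. B k - A k) < e"
    for N :: nat and A B :: "nat \<Rightarrow> real"
  proof -
    have "(\<Sum>k<N. norm (B k - A k)) = (\<Sum>k<N. B k - A k)"
      by (rule sum.cong) (use that(1) in auto)
    then show ?thesis using that(2) by simp
  qed
  then show "\<exists>\<delta>>0. \<forall>(N::nat) A B. (\<forall>k<N. A k \<le> B k \<and> {A k..B k} \<subseteq> S) \<and>
        disjoint_family_on (\<lambda>k. {A k<..<B k}) {..<N} \<and> (\<Sum>k<N. B k - A k) < \<delta> \<longrightarrow>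
        (\<Sum>k<N. norm (B k - A k)) < e"
    using e by blast
qed

lemma ac_const: "absolutely_continuous_on S (\<lambda>t::real. c)"
  by (rule ac_dom_fin[where I="{}" and K=0]) auto

lemma ac_lip:
  fixes X :: "real \<Rightarrow> 'b::real_normed_vector" and h :: "'b \<Rightarrow> 'c::real_normed_vector"
  assumes "absolutely_continuous_on S X" "\<And>s. s \<in> S \<Longrightarrow> X s \<in> D" "K \<ge> 0"
    "\<And>x y. x \<in> D \<Longrightarrow> y \<in> D \<Longrightarrow> norm (h x - h y) \<le> K * norm (x - y)"
  shows "absolutely_continuous_on S (\<lambda>t. h (X t))"
  by (rule ac_dom_fin[where I="{()}" and F="\<lambda>_. X" and K=K]) (use assms in auto)

lemma ac_add:
  fixes u v :: "real \<Rightarrow> 'b::real_normed_vector"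
  assumes "absolutely_continuous_on S u" "absolutely_continuous_on S v"
  shows "absolutely_continuous_on S (\<lambda>t. u t + v t)"
proof (rule ac_dom2[OF assms, where K=1])
  fix s t show "norm (u t + v t - (u s + v s)) \<le> 1 * (norm (u t - u s) + norm (v t - v s))"
    using norm_triangle_ineq[of "u t - u s" "v t - v s"] by (simp add: algebra_simps)
qed simp

lemma ac_diff:
  fixes u v :: "real \<Rightarrow> 'b::real_normed_vector"
  assumes "absolutely_continuous_on S u" "absolutely_continuous_on S v"
  shows "absolutely_continuous_on S (\<lambda>t. u t - v t)"
proof (rule ac_dom2[OF assms, where K=1])
  fix s t show "norm (u t - v t - (u s - v s)) \<le> 1 * (norm (u t - u s) + norm (v t - v s))"
    using norm_triangle_ineq4[of "u t - u s" "v t - v s"] by (simp add: algebra_simps)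
qed simp

lemma ac_mult:
  fixes u v :: "real \<Rightarrow> real"
  assumes u: "absolutely_continuous_on {a..b} u" and v: "absolutely_continuous_on {a..b} v"
  shows "absolutely_continuous_on {a..b} (\<lambda>t. u t * v t)"
proof -
  obtain Bu where Bu: "Bu \<ge> 0" "\<And>s. s \<in> {a..b} \<Longrightarrow> norm (u s) \<le> Bu" using ac_bounded[OF u] by blast
  obtain Bv where Bv: "Bv \<ge> 0" "\<And>s. s \<in> {a..b} \<Longrightarrow> norm (v s) \<le> Bv" using ac_bounded[OF v] by blast
  show ?thesis
  proof (rule ac_dom2[OF u v, where K="Bu + Bv"])
    fix s t assume st: "s \<in> {a..b}" "t \<in> {a..b}"
    have "u t * v t - u s * v s = u t * (v t - v s) + v s * (u t - u s)" by (simp add: algebra_simps)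
    then have "\<bar>u t * v t - u s * v s\<bar> \<le> \<bar>u t\<bar> * \<bar>v t - v s\<bar> + \<bar>v s\<bar> * \<bar>u t - u s\<bar>"
      by (metis abs_mult abs_triangle_ineq)
    also have "\<dots> \<le> Bu * \<bar>v t - v s\<bar> + Bv * \<bar>u t - u s\<bar>"
      using Bu(2)[OF st(2)] Bv(2)[OF st(1)] by (intro add_mono mult_right_mono) auto
    also have "\<dots> \<le> (Bu + Bv) * (\<bar>u t - u s\<bar> + \<bar>v t - v s\<bar>)"
      using Bu Bv by (simp add: algebra_simps)
    finally show "norm (u t * v t - u s * v s) \<le> (Bu + Bv) * (norm (u t - u s) + norm (v t - v s))"
      by simp
  qed (use Bu Bv in simp)
qed

lemma Min_range_diff_le:
  fixes a b :: "'i::finite \<Rightarrow> real"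
  shows "\<bar>Min (range a) - Min (range b)\<bar> \<le> (\<Sum>j\<in>UNIV. \<bar>a j - b j\<bar>)"
proof -
  have gen: "Min (range a) - Min (range b) \<le> (\<Sum>j\<in>UNIV. \<bar>a j - b j\<bar>)" for a b :: "'i \<Rightarrow> real"
  proof -
    have "Min (range b) \<in> range b" by (rule Min_in) auto
    then obtain k where k: "Min (range b) = b k" by blast
    have "Min (range a) \<le> a k" by simp
    then have "Min (range a) - Min (range b) \<le> \<bar>a k - b k\<bar>" using k by linarith
    also have "\<dots> \<le> (\<Sum>j\<in>UNIV. \<bar>a j - b j\<bar>)"
      by (rule member_le_sum) auto
    finally show ?thesis .
  qed
  show ?thesis using gen[of a b] gen[of b a] by (simp add: abs_minus_commute abs_le_iff)
qed

lemma ac_min: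
  fixes F :: "'i::finite \<Rightarrow> real \<Rightarrow> real"
  assumes "\<And>j. absolutely_continuous_on S (F j)"
  shows "absolutely_continuous_on S (\<lambda>t. Min (range (\<lambda>j. F j t)))"
  by (rule ac_dom_fin[where I=UNIV and F=F and K=1]) (use assms Min_range_diff_le in auto)

lemma ac_restrict:
  assumes "absolutely_continuous_on S f" "T \<subseteq> S"
  shows "absolutely_continuous_on T f"
  using assms unfolding absolutely_continuous_on_def by (meson order_trans)

lemma cond_of_eventually:
  fixes \<phi> :: "real \<Rightarrow> real"
  assumes "\<forall>\<epsilon>>0. eventually (\<lambda>s. (t \<le> s \<longrightarrow> \<phi> s - \<phi> t \<le> \<epsilon> * (s - t)) \<and> (s \<le> t \<longrightarrow> \<phi> t - \<phi> s \<le> \<epsilon> * (t - s))) (at t)"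
  shows "\<forall>\<epsilon>>0. \<exists>d>0. \<forall>u w. t - d < u \<longrightarrow> u \<le> t \<longrightarrow> t \<le> w \<longrightarrow> w < t + d \<longrightarrow> \<phi> w - \<phi> u \<le> \<epsilon> * (w - u)"
proof (intro allI impI)
  fix \<epsilon> :: real assume \<epsilon>: "\<epsilon> > 0"
  then obtain d where d: "d > 0" and H: "\<And>s. s \<noteq> t \<Longrightarrow> dist s t < d \<Longrightarrow>
      (t \<le> s \<longrightarrow> \<phi> s - \<phi> t \<le> \<epsilon> * (s - t)) \<and> (s \<le> t \<longrightarrow> \<phi> t - \<phi> s \<le> \<epsilon> * (t - s))"
    using assms unfolding eventually_at by (metis UNIV_I)
  have H': "(t \<le> s \<longrightarrow> \<phi> s - \<phi> t \<le> \<epsilon> * (s - t)) \<and> (s \<le> t \<longrightarrow> \<phi> t - \<phi> s \<le> \<epsilon> * (t - s))"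
    if "dist s t < d" for s
    using H[OF _ that] by (cases "s = t") auto
  show "\<exists>d>0. \<forall>u w. t - d < u \<longrightarrow> u \<le> t \<longrightarrow> t \<le> w \<longrightarrow> w < t + d \<longrightarrow> \<phi> w - \<phi> u \<le> \<epsilon> * (w - u)"
  proof (intro exI[of _ d] conjI allI impI d)
    fix u w assume uw: "t - d < u" "u \<le> t" "t \<le> w" "w < t + d"
    have "\<phi> w - \<phi> t \<le> \<epsilon> * (w - t)" using H'[of w] uw by (auto simp: dist_real_def)
    moreover have "\<phi> t - \<phi> u \<le> \<epsilon> * (t - u)" using H'[of u] uw by (auto simp: dist_real_def)
    ultimately show "\<phi> w - \<phi> u \<le> \<epsilon> * (w - u)" by (simp add: algebra_simps)
  qed
qed

lemma deriv_eventually: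
  fixes \<phi> :: "real \<Rightarrow> real"
  assumes "(\<phi> has_real_derivative D) (at t)" "\<epsilon> > 0"
  shows "eventually (\<lambda>s. \<bar>\<phi> s - \<phi> t - D * (s - t)\<bar> \<le> \<epsilon> * \<bar>s - t\<bar>) (at t)"
proof -
  have "((\<lambda>y. (\<phi> y - \<phi> t) / (y - t)) \<longlongrightarrow> D) (at t)"
    using assms(1) by (simp add: has_field_derivative_iff)
  then have "eventually (\<lambda>y. dist ((\<phi> y - \<phi> t) / (y - t)) D < \<epsilon>) (at t)"
    using assms(2) tendstoD by blast
  moreover have "eventually (\<lambda>y. y \<noteq> t) (at t)" by (simp add: eventually_at_filter)
  ultimately show ?thesis
  proof eventually_elim
    case (elim y)
    have "\<phi> y - \<phi> t - D * (y - t) = ((\<phi> y - \<phi> t) / (y - t) - D) * (y - t)"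
      using elim(2) by (simp add: field_simps)
    then have "\<bar>\<phi> y - \<phi> t - D * (y - t)\<bar> = \<bar>(\<phi> y - \<phi> t) / (y - t) - D\<bar> * \<bar>y - t\<bar>"
      by (simp add: abs_mult)
    also have "\<dots> \<le> \<epsilon> * \<bar>y - t\<bar>"
      using elim(1) by (intro mult_right_mono) (auto simp: dist_real_def)
    finally show ?case .
  qed
qed

lemma min_cond:
  fixes \<phi> :: "'i::finite \<Rightarrow> real \<Rightarrow> real"
  assumes deriv: "\<And>j. (\<phi> j has_real_derivative D j) (at t)"
    and act: "\<And>j. \<phi> j t = Min (range (\<lambda>k. \<phi> k t)) \<Longrightarrow> D j \<le> 0"
  shows "\<forall>\<epsilon>>0. eventually (\<lambda>s. (t \<le> s \<longrightarrow> Min (range (\<lambda>j. \<phi> j s)) - Min (range (\<lambda>j. \<phi> j t)) \<le> \<epsilon> * (s - t))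
     \<and> (s \<le> t \<longrightarrow> Min (range (\<lambda>j. \<phi> j t)) - Min (range (\<lambda>j. \<phi> j s)) \<le> \<epsilon> * (t - s))) (at t)"
proof (intro allI impI)
  fix \<epsilon> :: real assume \<epsilon>: "\<epsilon> > 0"
  define m where "m s = Min (range (\<lambda>j. \<phi> j s))" for s
  have mle: "m s \<le> \<phi> j s" for s j unfolding m_def by simp
  have min_attained: "\<exists>j. m s = \<phi> j s" for s
  proof -
    have "m s \<in> range (\<lambda>j. \<phi> j s)" unfolding m_def by (rule Min_in) auto
    then show ?thesis by blast
  qed
  have e1: "eventually (\<lambda>s. \<forall>j. \<bar>\<phi> j s - \<phi> j t - D j * (s - t)\<bar> \<le> \<epsilon> * \<bar>s - t\<bar>) (at t)"
    by (rule eventually_all_finite) (rule deriv_eventually[OF deriv \<epsilon>])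
  have e2: "eventually (\<lambda>s. \<forall>j. m t < \<phi> j t \<longrightarrow> m t < \<phi> j s) (at t)"
  proof (rule eventually_all_finite)
    fix j
    have "(\<phi> j \<longlongrightarrow> \<phi> j t) (at t)"
      using DERIV_isCont[OF deriv[of j]] by (simp add: isCont_def)
    then show "eventually (\<lambda>s. m t < \<phi> j t \<longrightarrow> m t < \<phi> j s) (at t)"
      by (cases "m t < \<phi> j t") (auto dest: order_tendstoD(1))
  qed
  show "eventually (\<lambda>s. (t \<le> s \<longrightarrow> Min (range (\<lambda>j. \<phi> j s)) - Min (range (\<lambda>j. \<phi> j t)) \<le> \<epsilon> * (s - t))
     \<and> (s \<le> t \<longrightarrow> Min (range (\<lambda>j. \<phi> j t)) - Min (range (\<lambda>j. \<phi> j s)) \<le> \<epsilon> * (t - s))) (at t)"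
    using e1 e2
  proof eventually_elim
    case (elim s)
    obtain k where k: "m t = \<phi> k t" using min_attained by blast
    have Dk: "D k \<le> 0" using act[of k] k unfolding m_def by simp
    have A: "m s - m t \<le> \<epsilon> * (s - t)" if "t \<le> s"
    proof -
      have "m s \<le> \<phi> k s" by (rule mle)
      also have "\<dots> \<le> \<phi> k t + D k * (s - t) + \<epsilon> * \<bar>s - t\<bar>" using elim(1)[rule_format, of k] by linarith
      also have "D k * (s - t) \<le> 0" using Dk that by (simp add: mult_nonpos_nonneg)
      finally show ?thesis using k that by simp
    qed
    have B: "m t - m s \<le> \<epsilon> * (t - s)" if "s \<le> t"
    proof -
      obtain j where j: "m s = \<phi> j s" using min_attained by blast
      show ?thesis
      proof (cases "m t < \<phi> j t")
        case True
        then have "m t < \<phi> j s" using elim(2) by blast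
        moreover have "0 \<le> \<epsilon> * (t - s)" using \<epsilon> that by simp
        ultimately show ?thesis using j by linarith
      next
        case False
        then have jt: "\<phi> j t = m t" using mle[of t j] by simp
        then have Dj: "D j \<le> 0" using act[of j] unfolding m_def by simp
        have "\<phi> j t + D j * (s - t) - \<epsilon> * \<bar>s - t\<bar> \<le> \<phi> j s" using elim(1)[rule_format, of j] by linarith
        moreover have "D j * (s - t) \<ge> 0" using Dj that by (simp add: mult_nonpos_nonpos)
        ultimately show ?thesis using j jt that by simp
      qed
    qed
    show ?case using A B unfolding m_def by blast
  qed
qed

lemma deriv_cond:
  fixes \<phi> :: "real \<Rightarrow> real"
  assumes "(\<phi> has_real_derivative D) (at t)" "D \<le> 0"
  shows "\<forall>\<epsilon>>0. eventually (\<lambda>s. (t \<le> s \<longrightarrow> \<phi> s - \<phi> t \<le> \<epsilon> * (s - t)) \<and> (s \<le> t \<longrightarrow> \<phi> t - \<phi> s \<le> \<epsilon> * (t - s))) (at t)"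
  using min_cond[where \<phi>="\<lambda>_::unit. \<phi>" and D="\<lambda>_. D" and t=t] assms by simp

lemma deriv_comp_f:
  fixes F :: "'a::real_inner \<Rightarrow> real"
  assumes "(F has_derivative (\<lambda>h. G \<bullet> h)) (at (X t))" "(X has_vector_derivative V) (at t)"
  shows "((\<lambda>s. F (X s)) has_real_derivative (G \<bullet> V)) (at t)"
proof -
  have "(X has_derivative (\<lambda>h. h *\<^sub>R V)) (at t)" using assms(2) by (simp add: has_vector_derivative_def)
  from has_derivative_compose[OF this assms(1)]
  have "((\<lambda>s. F (X s)) has_derivative (\<lambda>h. G \<bullet> (h *\<^sub>R V))) (at t)" .
  then show ?thesis by (rule has_derivative_imp_has_field_derivative) simp
qed

lemma deriv_normsq:
  fixes Y :: "real \<Rightarrow> 'a::real_inner"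
  assumes "(Y has_vector_derivative W) (at t)"
  shows "((\<lambda>s. (norm (Y s))\<^sup>2) has_real_derivative (2 * (Y t \<bullet> W))) (at t)"
proof -
  have "(Y has_derivative (\<lambda>h. h *\<^sub>R W)) (at t)" using assms by (simp add: has_vector_derivative_def)
  from has_derivative_inner[OF this this]
  have "((\<lambda>s. Y s \<bullet> Y s) has_derivative (\<lambda>h. Y t \<bullet> (h *\<^sub>R W) + (h *\<^sub>R W) \<bullet> Y t)) (at t)" .
  then have "((\<lambda>s. (norm (Y s))\<^sup>2) has_derivative (\<lambda>h. Y t \<bullet> (h *\<^sub>R W) + (h *\<^sub>R W) \<bullet> Y t)) (at t)"
    by (simp add: power2_norm_eq_inner)
  then show ?thesis
    by (rule has_derivative_imp_has_field_derivative) (simp add: inner_commute algebra_simps)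
qed

locale setting =
  fixes f :: "'i::finite \<Rightarrow> 'a::euclidean_space \<Rightarrow> real"
    and g :: "'i \<Rightarrow> 'a \<Rightarrow> 'a"
    and \<mu>s Ls :: "'i \<Rightarrow> real"
    and \<gamma>0 :: real and x0 x1 :: 'a
    and X Z :: "real \<Rightarrow> 'a"
  assumes grad: "\<And>j x. (f j has_derivative (\<lambda>h. g j x \<bullet> h)) (at x)"
    and lip: "\<And>j x y. norm (g j x - g j y) \<le> Ls j * norm (x - y)"
    and sconv: "\<And>j y z. f j z \<ge> f j y + g j y \<bullet> (z - y) + \<mu>s j / 2 * (norm (z - y))\<^sup>2"
    and mu_nonneg: "\<And>j. 0 \<le> \<mu>s j"
    and mu_le_L: "\<And>j. \<mu>s j \<le> Ls j"
    and gamma0_pos: "\<gamma>0 > 0"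
    and X_ac: "loc_abs_cont_nonneg X"
    and Z_ac: "loc_abs_cont_nonneg Z"
    and X0: "X 0 = x0"
    and Z0: "Z 0 = x0 + x1"
begin

definition "mu = Min (range \<mu>s)"
definition "gam t = mu + (\<gamma>0 - mu) * exp (- t)"

lemma mu_le: "mu \<le> \<mu>s j" unfolding mu_def by simp

lemma mu_nn: "mu \<ge> 0"
proof -
  have "mu \<in> range \<mu>s" unfolding mu_def by (rule Min_in) auto
  then show ?thesis using mu_nonneg by auto
qed

lemma gam_nn: "t \<ge> 0 \<Longrightarrow> gam t \<ge> 0"
proof -
  assume t: "t \<ge> 0"
  have e: "0 < exp (- t)" "exp (- t) \<le> 1" using t by auto
  have "gam t = mu * (1 - exp (- t)) + \<gamma>0 * exp (- t)" by (simp add: gam_def algebra_simps)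
  also have "\<dots> \<ge> 0" using e mu_nn gamma0_pos by (intro add_nonneg_nonneg mult_nonneg_nonneg) auto
  finally show ?thesis .
qed

lemma gam0: "gam 0 = \<gamma>0" by (simp add: gam_def)

lemma gam_deriv: "(gam has_real_derivative (mu - gam t)) (at t)"
proof -
  have "((\<lambda>s. mu + (\<gamma>0 - mu) * exp (- s)) has_real_derivative (0 + (\<gamma>0 - mu) * (exp (- t) * (- 1)))) (at t)"
    by (intro DERIV_add DERIV_const DERIV_cmult DERIV_chain2[where f=exp] DERIV_exp DERIV_minus DERIV_ident)
  then show ?thesis unfolding gam_def[abs_def] by (simp add: algebra_simps)
qed

lemma Ls_nn: "Ls j \<ge> 0" using mu_nonneg[of j] mu_le_L[of j] by linarith

lemma f_conv: "f j z \<ge> f j y + g j y \<bullet> (z - y)"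
  using sconv[of j y z] mu_nonneg[of j] by (smt (verit) mult_nonneg_nonneg zero_le_power2 divide_nonneg_pos)

lemma f_lip:
  assumes "norm x \<le> B" "norm y \<le> B"
  shows "\<bar>f j x - f j y\<bar> \<le> (norm (g j 0) + Ls j * B) * norm (x - y)"
proof -
  have gb: "norm (g j w) \<le> norm (g j 0) + Ls j * B" if "norm w \<le> B" for w
  proof -
    have "norm (g j w) \<le> norm (g j 0) + norm (g j w - g j 0)" by (metis add.commute diff_add_cancel norm_triangle_ineq)
    also have "norm (g j w - g j 0) \<le> Ls j * norm w" using lip[of j w 0] by simp
    also have "\<dots> \<le> Ls j * B" using that Ls_nn by (intro mult_left_mono) auto
    finally show ?thesis by simp
  qed
  have 1: "f j x - f j y \<le> (norm (g j 0) + Ls j * B) * norm (x - y)"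
  proof -
    have "f j x - f j y \<le> - (g j x \<bullet> (y - x))" using f_conv[where j=j and z=y and y=x] by linarith
    also have "\<dots> = g j x \<bullet> (x - y)" by (simp add: inner_diff_right)
    also have "\<dots> \<le> norm (g j x) * norm (x - y)" by (rule norm_cauchy_schwarz)
    also have "\<dots> \<le> (norm (g j 0) + Ls j * B) * norm (x - y)" using gb[OF assms(1)] by (intro mult_right_mono) auto
    finally show ?thesis .
  qed
  have 2: "f j y - f j x \<le> (norm (g j 0) + Ls j * B) * norm (x - y)"
  proof -
    have "f j y - f j x \<le> - (g j y \<bullet> (x - y))" using f_conv[where j=j and z=x and y=y] by linarith
    also have "\<dots> = g j y \<bullet> (y - x)" by (simp add: inner_diff_right)
    also have "\<dots> \<le> norm (g j y) * norm (y - x)" by (rule norm_cauchy_schwarz)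
    also have "\<dots> \<le> (norm (g j 0) + Ls j * B) * norm (x - y)" using gb[OF assms(2)] by (simp add: norm_minus_commute mult_right_mono)
    finally show ?thesis .
  qed
  show ?thesis using 1 2 by linarith
qed

lemma energy1_deriv:
  assumes hX: "(X has_vector_derivative (Z t - X t)) (at t)" and hZ: "(Z has_vector_derivative Z') (at t)"
    and hv: "v \<in> convex hull (range (\<lambda>j. g j (X t)))"
    and am: "\<forall>w \<in> convex hull (range (\<lambda>j. g j (X t))). (X t - Z t) \<bullet> v \<le> (X t - Z t) \<bullet> w"
    and eq: "gam t *\<^sub>R Z' = mu *\<^sub>R (X t - Z t) - v" and t: "t \<ge> 0"
  shows "\<exists>D. ((\<lambda>s. f j (X s) + gam s / 2 * (norm (Z s - X s))\<^sup>2) has_real_derivative D) (at t) \<and> D \<le> 0"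
proof -
  define d where "d = Z t - X t"
  have dN: "((\<lambda>s. (norm (Z s - X s))\<^sup>2) has_real_derivative (2 * (d \<bullet> (Z' - d)))) (at t)"
    using deriv_normsq[OF has_vector_derivative_diff[OF hZ hX]] by (simp add: d_def)
  have dg: "((\<lambda>s. gam s / 2) has_real_derivative ((mu - gam t) / 2)) (at t)"
    by (rule DERIV_cdivide[OF gam_deriv])
  have der: "((\<lambda>s. f j (X s) + gam s / 2 * (norm (Z s - X s))\<^sup>2) has_real_derivative
      (g j (X t) \<bullet> d + ((mu - gam t) / 2 * (norm d)\<^sup>2 + 2 * (d \<bullet> (Z' - d)) * (gam t / 2)))) (at t)"
    using DERIV_add[OF deriv_comp_f[OF grad hX] DERIV_mult[OF dg dN]] by (simp add: d_def)
  have gin: "g j (X t) \<in> convex hull (range (\<lambda>j. g j (X t)))" by (rule hull_inc) auto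
  have a: "d \<bullet> g j (X t) \<le> d \<bullet> v"
    using am gin unfolding d_def by (smt (verit) inner_minus_left minus_diff_eq)
  have b: "gam t * (d \<bullet> Z') = - mu * (d \<bullet> d) - d \<bullet> v"
  proof -
    have "gam t * (d \<bullet> Z') = d \<bullet> (gam t *\<^sub>R Z')" by simp
    also have "\<dots> = d \<bullet> (mu *\<^sub>R (X t - Z t) - v)" by (simp add: eq)
    also have "X t - Z t = - d" by (simp add: d_def)
    finally show ?thesis by (simp add: inner_diff_right)
  qed
  have gt: "gam t \<ge> 0" using gam_nn[OF t] .
  have dd: "d \<bullet> d \<ge> 0" by simp
  have "g j (X t) \<bullet> d + ((mu - gam t) / 2 * (norm d)\<^sup>2 + 2 * (d \<bullet> (Z' - d)) * (gam t / 2))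
      = d \<bullet> g j (X t) + (mu - gam t) / 2 * (d \<bullet> d) + gam t * (d \<bullet> Z') - gam t * (d \<bullet> d)"
    by (simp add: power2_norm_eq_inner inner_diff_right inner_commute algebra_simps)
  also have "\<dots> \<le> 0"
  proof -
    have p1: "mu * (d \<bullet> d) \<ge> 0" using mu_nn dd by simp
    have p2: "gam t * (d \<bullet> d) \<ge> 0" using gt dd by simp
    have p3: "(mu - gam t) / 2 * (d \<bullet> d) = (mu * (d \<bullet> d) - gam t * (d \<bullet> d)) / 2" by (simp add: algebra_simps)
    have b': "gam t * (d \<bullet> Z') = - (mu * (d \<bullet> d)) - d \<bullet> v" using b by simp
    show ?thesis using a b' p1 p2 p3 by argo
  qed
  finally show ?thesis using der by blast
qed

lemma energy2_deriv:
  assumes hX: "(X has_vector_derivative (Z t - X t)) (at t)" and hZ: "(Z has_vector_derivative Z') (at t)"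
    and hv: "v \<in> convex hull (range (\<lambda>j. g j (X t)))"
    and am: "\<forall>w \<in> convex hull (range (\<lambda>j. g j (X t))). (X t - Z t) \<bullet> v \<le> (X t - Z t) \<bullet> w"
    and eq: "gam t *\<^sub>R Z' = mu *\<^sub>R (X t - Z t) - v" and t: "t \<ge> 0"
  shows "\<exists>D. ((\<lambda>s. exp s * (f j (X s) - f j z + gam s / 2 * (norm (Z s - z))\<^sup>2)) has_real_derivative D) (at t) \<and>
     ((\<forall>k. f j (X t) - f j z \<le> f k (X t) - f k z) \<longrightarrow> D \<le> 0)"
proof -
  define d where "d = Z t - X t"
  define a where "a = X t - z"
  define A where "A = f j (X t) - f j z"
  have hZz: "((\<lambda>s. Z s - z) has_vector_derivative Z') (at t)"
    using has_vector_derivative_diff[OF hZ has_vector_derivative_const[of z]] by simp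
  have dN: "((\<lambda>s. (norm (Z s - z))\<^sup>2) has_real_derivative (2 * ((Z t - z) \<bullet> Z'))) (at t)"
    using deriv_normsq[OF hZz] by simp
  have dg: "((\<lambda>s. gam s / 2) has_real_derivative ((mu - gam t) / 2)) (at t)"
    by (rule DERIV_cdivide[OF gam_deriv])
  have dE: "((\<lambda>s. f j (X s) - f j z + gam s / 2 * (norm (Z s - z))\<^sup>2) has_real_derivative
      (g j (X t) \<bullet> d - 0 + ((mu - gam t) / 2 * (norm (Z t - z))\<^sup>2 + 2 * ((Z t - z) \<bullet> Z') * (gam t / 2)))) (at t)"
    using DERIV_add[OF DERIV_diff[OF deriv_comp_f[OF grad hX] DERIV_const] DERIV_mult[OF dg dN]] by (simp add: d_def)
  note der = DERIV_mult[OF DERIV_exp dE]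
  show ?thesis
  proof (intro exI conjI impI, rule der)
    assume act: "\<forall>k. f j (X t) - f j z \<le> f k (X t) - f k z"
    have gin: "g j (X t) \<in> convex hull (range (\<lambda>j. g j (X t)))" by (rule hull_inc) auto
    have ia: "d \<bullet> g j (X t) \<le> d \<bullet> v"
      using am gin unfolding d_def by (smt (verit) inner_minus_left minus_diff_eq)
    have ib: "v \<bullet> a \<ge> A + mu / 2 * (a \<bullet> a)"
    proof -
      have "range (\<lambda>j. g j (X t)) \<subseteq> {u. a \<bullet> u \<ge> A + mu / 2 * (a \<bullet> a)}"
      proof clarify
        fix k
        have e1: "(norm (z - X t))\<^sup>2 = a \<bullet> a" by (simp add: a_def power2_norm_eq_inner inner_commute inner_diff_left inner_diff_right)
        have e2: "g k (X t) \<bullet> (z - X t) = - (a \<bullet> g k (X t))" by (simp add: a_def inner_commute inner_diff_right inner_diff_left)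
        have "f k z \<ge> f k (X t) + g k (X t) \<bullet> (z - X t) + \<mu>s k / 2 * (norm (z - X t))\<^sup>2"
          by (rule sconv)
        then have "f k z \<ge> f k (X t) + - (a \<bullet> g k (X t)) + \<mu>s k / 2 * (a \<bullet> a)"
          by (simp only: e1 e2)
        moreover have "mu / 2 * (a \<bullet> a) \<le> \<mu>s k / 2 * (a \<bullet> a)" using mu_le[of k] by (intro mult_right_mono) auto
        moreover have "A \<le> f k (X t) - f k z" using act unfolding A_def by blast
        ultimately show "A + mu / 2 * (a \<bullet> a) \<le> a \<bullet> g k (X t)" by linarith
      qed
      then have "convex hull (range (\<lambda>j. g j (X t))) \<subseteq> {u. a \<bullet> u \<ge> A + mu / 2 * (a \<bullet> a)}"
        by (intro hull_minimal convex_halfspace_ge)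
      then show ?thesis using hv by (auto simp: inner_commute)
    qed
    have w: "Z t - z = a + d" by (simp add: a_def d_def)
    have ic: "gam t * ((Z t - z) \<bullet> Z') = - mu * ((a + d) \<bullet> d) - (a + d) \<bullet> v"
    proof -
      have "gam t * ((Z t - z) \<bullet> Z') = (Z t - z) \<bullet> (gam t *\<^sub>R Z')" by simp
      also have "\<dots> = (a + d) \<bullet> (mu *\<^sub>R (X t - Z t) - v)" by (simp add: eq w)
      also have "X t - Z t = - d" by (simp add: d_def)
      finally show ?thesis by (simp add: inner_diff_right)
    qed
    have key: "A + gam t / 2 * (norm (Z t - z))\<^sup>2 + (g j (X t) \<bullet> d - 0 + ((mu - gam t) / 2 * (norm (Z t - z))\<^sup>2 + 2 * ((Z t - z) \<bullet> Z') * (gam t / 2))) \<le> 0"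
    proof -
      have "A + gam t / 2 * (norm (Z t - z))\<^sup>2 + (g j (X t) \<bullet> d - 0 + ((mu - gam t) / 2 * (norm (Z t - z))\<^sup>2 + 2 * ((Z t - z) \<bullet> Z') * (gam t / 2)))
        = A + d \<bullet> g j (X t) + mu / 2 * ((a + d) \<bullet> (a + d)) + gam t * ((Z t - z) \<bullet> Z')"
        by (simp add: w power2_norm_eq_inner inner_commute algebra_simps) (simp add: field_simps)
      also have "\<dots> = A + d \<bullet> g j (X t) + mu / 2 * ((a + d) \<bullet> (a + d)) - mu * ((a + d) \<bullet> d) - (a + d) \<bullet> v"
        by (simp add: ic)
      also have "\<dots> = A + d \<bullet> g j (X t) - d \<bullet> v - v \<bullet> a + mu / 2 * (a \<bullet> a) - mu / 2 * (d \<bullet> d)"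
        by (simp add: inner_add_left inner_add_right inner_commute algebra_simps)
      also have "\<dots> \<le> 0"
      proof -
        have "mu / 2 * (d \<bullet> d) \<ge> 0" using mu_nn by simp
        then show ?thesis using ia ib by linarith
      qed
      finally show ?thesis .
    qed
    have "exp t * (f j (X t) - f j z + gam t / 2 * (norm (Z t - z))\<^sup>2) + (g j (X t) \<bullet> d - 0 + ((mu - gam t) / 2 * (norm (Z t - z))\<^sup>2 + 2 * ((Z t - z) \<bullet> Z') * (gam t / 2))) * exp t
       = exp t * (A + gam t / 2 * (norm (Z t - z))\<^sup>2 + (g j (X t) \<bullet> d - 0 + ((mu - gam t) / 2 * (norm (Z t - z))\<^sup>2 + 2 * ((Z t - z) \<bullet> Z') * (gam t / 2))))"
      by (simp add: A_def algebra_simps)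
    also have "\<dots> \<le> 0" using key by (simp add: mult_nonneg_nonpos)
    finally show "exp t * (f j (X t) - f j z + gam t / 2 * (norm (Z t - z))\<^sup>2) + (g j (X t) \<bullet> d - 0 + ((mu - gam t) / 2 * (norm (Z t - z))\<^sup>2 + 2 * ((Z t - z) \<bullet> Z') * (gam t / 2))) * exp t \<le> 0"
      by (simp add: algebra_simps)
  qed
qed

end

lemma exp_neg_lip: "(s::real) \<ge> 0 \<Longrightarrow> s' \<ge> 0 \<Longrightarrow> \<bar>exp (- s) - exp (- s')\<bar> \<le> \<bar>s - s'\<bar>"
proof -
  have gen: "exp (- u) - exp (- v) \<le> v - u" if "0 \<le> u" "u \<le> v" for u v :: real
  proof -
    have "exp (- u) - exp (- v) = exp (- u) * (1 - exp (- (v - u)))" by (simp add: algebra_simps exp_diff exp_minus field_simps)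
    also have "\<dots> \<le> 1 * (v - u)"
    proof (rule mult_mono)
      show "exp (- u) \<le> 1" using that by simp
      show "1 - exp (- (v - u)) \<le> v - u" using exp_ge_add_one_self[of "- (v - u)"] by linarith
      show "0 \<le> 1 - exp (- (v - u))" using that by simp
    qed simp
    finally show ?thesis by simp
  qed
  assume "s \<ge> 0" "s' \<ge> 0"
  then show ?thesis using gen[of s s'] gen[of s' s] by (cases "s \<le> s'") (auto simp: abs_if)
qed

lemma exp_lip: "(s::real) \<le> T \<Longrightarrow> s' \<le> T \<Longrightarrow> \<bar>exp s - exp s'\<bar> \<le> exp T * \<bar>s - s'\<bar>"
proof -
  have gen: "exp v - exp u \<le> exp T * (v - u)" if "u \<le> v" "v \<le> T" for u v :: real
  proof -
    have "exp v - exp u = exp v * (1 - exp (- (v - u)))" by (simp add: algebra_simps exp_diff exp_minus field_simps)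
    also have "\<dots> \<le> exp T * (v - u)"
    proof (rule mult_mono)
      show "exp v \<le> exp T" using that by simp
      show "1 - exp (- (v - u)) \<le> v - u" using exp_ge_add_one_self[of "- (v - u)"] by linarith
      show "0 \<le> 1 - exp (- (v - u))" using that by simp
    qed simp
    finally show ?thesis .
  qed
  assume "s \<le> T" "s' \<le> T"
  then show ?thesis using gen[of s s'] gen[of s' s] by (cases "s \<le> s'") (auto simp: abs_if)
qed

lemma ac_nsq:
  fixes Y :: "real \<Rightarrow> 'a::real_normed_vector"
  assumes "absolutely_continuous_on {a..b} Y"
  shows "absolutely_continuous_on {a..b} (\<lambda>s. (norm (Y s))\<^sup>2)"
proof -
  obtain B where B: "B \<ge> 0" "\<And>s. s \<in> {a..b} \<Longrightarrow> norm (Y s) \<le> B" using ac_bounded[OF assms] by blast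
  show ?thesis
  proof (rule ac_lip[OF assms, where D="{x. norm x \<le> B}" and K="2 * B"])
    fix x y :: 'a assume xy: "x \<in> {x. norm x \<le> B}" "y \<in> {x. norm x \<le> B}"
    have e: "(norm x)\<^sup>2 - (norm y)\<^sup>2 = (norm x - norm y) * (norm x + norm y)"
      by (simp add: power2_eq_square algebra_simps)
    have e2: "\<bar>norm x + norm y\<bar> = norm x + norm y" by simp
    have "\<bar>(norm x)\<^sup>2 - (norm y)\<^sup>2\<bar> = \<bar>norm x - norm y\<bar> * (norm x + norm y)"
      unfolding e abs_mult e2 ..
    also have "\<dots> \<le> norm (x - y) * (2 * B)"
      using xy by (intro mult_mono norm_triangle_ineq3) auto
    finally show "norm ((norm x)\<^sup>2 - (norm y)\<^sup>2) \<le> 2 * B * norm (x - y)" by (simp add: mult.commute)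
  qed (use B in auto)
qed

lemma ac_exp: "absolutely_continuous_on {a..b} (\<lambda>s. exp s)"
  by (rule ac_lip[OF ac_id, where D="{..b}" and K="exp b"]) (use exp_lip in auto)

lemma Min_affine:
  fixes a :: "'i::finite \<Rightarrow> real"
  assumes "c > 0"
  shows "Min (range (\<lambda>j. c * (a j + b))) = c * (Min (range a) + b)"
proof -
  have m: "mono (\<lambda>x. c * (x + b))" using assms by (auto simp: mono_def)
  have "(\<lambda>x. c * (x + b)) (Min (range a)) = Min ((\<lambda>x. c * (x + b)) ` range a)"
    by (rule mono_Min_commute[OF m]) auto
  then show ?thesis by (simp add: image_image)
qed

context setting
begin

lemma X_ac_T: "absolutely_continuous_on {0..T} X" if "T \<ge> 0"
  using X_ac that unfolding loc_abs_cont_nonneg_def by blast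
lemma Z_ac_T: "absolutely_continuous_on {0..T} Z" if "T \<ge> 0"
  using Z_ac that unfolding loc_abs_cont_nonneg_def by blast

lemma ac_fX: "absolutely_continuous_on {0..T} (\<lambda>s. f j (X s))" if T: "T \<ge> 0"
proof -
  obtain B where B: "B \<ge> 0" "\<And>s. s \<in> {0..T} \<Longrightarrow> norm (X s) \<le> B" using ac_bounded[OF X_ac_T[OF T]] by blast
  show ?thesis
    by (rule ac_lip[OF X_ac_T[OF T], where D="{x. norm x \<le> B}" and K="norm (g j 0) + Ls j * B"])
       (use B Ls_nn f_lip in \<open>auto intro!: add_nonneg_nonneg mult_nonneg_nonneg\<close>)
qed

lemma ac_gam: "absolutely_continuous_on {0..T} (\<lambda>s. gam s / 2)"
proof (rule ac_lip[OF ac_id, where D="{0..}" and K="\<bar>\<gamma>0 - mu\<bar>"])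
  fix x y :: real assume xy: "x \<in> {0..}" "y \<in> {0..}"
  have "\<bar>gam x / 2 - gam y / 2\<bar> \<le> \<bar>gam x - gam y\<bar>" by simp
  also have "gam x - gam y = (\<gamma>0 - mu) * (exp (- x) - exp (- y))" by (simp add: gam_def algebra_simps)
  also have "\<bar>\<dots>\<bar> \<le> \<bar>\<gamma>0 - mu\<bar> * \<bar>x - y\<bar>"
    unfolding abs_mult using exp_neg_lip[of x y] xy by (intro mult_left_mono) auto
  finally show "norm (gam x / 2 - gam y / 2) \<le> \<bar>\<gamma>0 - mu\<bar> * norm (x - y)" by simp
qed auto

lemma ac_E1: "absolutely_continuous_on {0..T} (\<lambda>s. f j (X s) + gam s / 2 * (norm (Z s - X s))\<^sup>2)" if "T \<ge> 0"
  by (intro ac_add ac_fX ac_mult ac_gam ac_nsq ac_diff X_ac_T Z_ac_T that)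

lemma ac_E2: "absolutely_continuous_on {0..T} (\<lambda>s. exp s * (f j (X s) - f j z + gam s / 2 * (norm (Z s - z))\<^sup>2))" if "T \<ge> 0"
  by (intro ac_add ac_fX ac_mult ac_gam ac_nsq ac_diff X_ac_T Z_ac_T that ac_exp ac_const)

end


locale setting2 = setting +
  assumes ode: "AE t in lborel. t > 0 \<longrightarrow>
        (X has_vector_derivative (Z t - X t)) (at t) \<and>
        (\<exists>Z' v. (Z has_vector_derivative Z') (at t) \<and>
           v \<in> convex hull (range (\<lambda>j. g j (X t))) \<and>
           (\<forall>w \<in> convex hull (range (\<lambda>j. g j (X t))). (X t - Z t) \<bullet> v \<le> (X t - Z t) \<bullet> w) \<and>
           (Min (range \<mu>s) + (\<gamma>0 - Min (range \<mu>s)) * exp (- t)) *\<^sub>R Z'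
              = Min (range \<mu>s) *\<^sub>R (X t - Z t) - v)"
begin

lemma good: "AE t in lborel. t > 0 \<longrightarrow>
        (X has_vector_derivative (Z t - X t)) (at t) \<and>
        (\<exists>Z' v. (Z has_vector_derivative Z') (at t) \<and>
           v \<in> convex hull (range (\<lambda>j. g j (X t))) \<and>
           (\<forall>w \<in> convex hull (range (\<lambda>j. g j (X t))). (X t - Z t) \<bullet> v \<le> (X t - Z t) \<bullet> w) \<and>
           gam t *\<^sub>R Z' = mu *\<^sub>R (X t - Z t) - v)"
  using ode unfolding gam_def mu_def .

lemma E1_mono:
  assumes T: "T \<ge> 0"
  shows "f j (X T) + gam T / 2 * (norm (Z T - X T))\<^sup>2 \<le> f j (X 0) + gam 0 / 2 * (norm (Z 0 - X 0))\<^sup>2"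
proof (rule ac_mono[OF T ac_E1[OF T]])
  show "AE t in lborel. 0 < t \<and> t < T \<longrightarrow> (\<forall>\<epsilon>>0. \<exists>d>0. \<forall>u w. t - d < u \<longrightarrow> u \<le> t \<longrightarrow> t \<le> w \<longrightarrow> w < t + d \<longrightarrow>
     (f j (X w) + gam w / 2 * (norm (Z w - X w))\<^sup>2) - (f j (X u) + gam u / 2 * (norm (Z u - X u))\<^sup>2) \<le> \<epsilon> * (w - u))"
    using good
  proof eventually_elim
    case (elim t)
    show ?case
    proof
      assume t: "0 < t \<and> t < T"
      then obtain Z' v where hX: "(X has_vector_derivative (Z t - X t)) (at t)"
        and rest: "(Z has_vector_derivative Z') (at t)" "v \<in> convex hull (range (\<lambda>j. g j (X t)))"
           "\<forall>w \<in> convex hull (range (\<lambda>j. g j (X t))). (X t - Z t) \<bullet> v \<le> (X t - Z t) \<bullet> w"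
           "gam t *\<^sub>R Z' = mu *\<^sub>R (X t - Z t) - v" using elim by blast
      obtain D where D: "((\<lambda>s. f j (X s) + gam s / 2 * (norm (Z s - X s))\<^sup>2) has_real_derivative D) (at t)" "D \<le> 0"
        using energy1_deriv[OF hX rest] t by auto
      show "\<forall>\<epsilon>>0. \<exists>d>0. \<forall>u w. t - d < u \<longrightarrow> u \<le> t \<longrightarrow> t \<le> w \<longrightarrow> w < t + d \<longrightarrow>
     (f j (X w) + gam w / 2 * (norm (Z w - X w))\<^sup>2) - (f j (X u) + gam u / 2 * (norm (Z u - X u))\<^sup>2) \<le> \<epsilon> * (w - u)"
        by (rule cond_of_eventually[OF deriv_cond[OF D]])
    qed
  qed
qed

lemma level_bound:
  assumes T: "T \<ge> 0"
  shows "f j (X T) \<le> f j x0 + \<gamma>0 / 2 * (norm x1)\<^sup>2"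
proof -
  have "gam T / 2 * (norm (Z T - X T))\<^sup>2 \<ge> 0" using gam_nn[OF T] by simp
  then show ?thesis using E1_mono[OF T, of j] by (simp add: X0 Z0 gam0)
qed

lemma E2_mono:
  assumes T: "T \<ge> 0"
  shows "Min (range (\<lambda>j. exp T * (f j (X T) - f j z + gam T / 2 * (norm (Z T - z))\<^sup>2)))
     \<le> Min (range (\<lambda>j. exp 0 * (f j (X 0) - f j z + gam 0 / 2 * (norm (Z 0 - z))\<^sup>2)))"
proof (rule ac_mono[OF T ac_min[OF ac_E2[OF T]]])
  show "AE t in lborel. 0 < t \<and> t < T \<longrightarrow> (\<forall>\<epsilon>>0. \<exists>d>0. \<forall>u w. t - d < u \<longrightarrow> u \<le> t \<longrightarrow> t \<le> w \<longrightarrow> w < t + d \<longrightarrow>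
     Min (range (\<lambda>j. exp w * (f j (X w) - f j z + gam w / 2 * (norm (Z w - z))\<^sup>2))) - Min (range (\<lambda>j. exp u * (f j (X u) - f j z + gam u / 2 * (norm (Z u - z))\<^sup>2))) \<le> \<epsilon> * (w - u))"
    using good
  proof eventually_elim
    case (elim t)
    show ?case
    proof
      assume t: "0 < t \<and> t < T"
      then obtain Z' v where hX: "(X has_vector_derivative (Z t - X t)) (at t)"
        and rest: "(Z has_vector_derivative Z') (at t)" "v \<in> convex hull (range (\<lambda>j. g j (X t)))"
           "\<forall>w \<in> convex hull (range (\<lambda>j. g j (X t))). (X t - Z t) \<bullet> v \<le> (X t - Z t) \<bullet> w"
           "gam t *\<^sub>R Z' = mu *\<^sub>R (X t - Z t) - v" using elim by blast
      define \<phi> where "\<phi> j s = exp s * (f j (X s) - f j z + gam s / 2 * (norm (Z s - z))\<^sup>2)" for j s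
      have "\<forall>j. \<exists>D. (\<phi> j has_real_derivative D) (at t) \<and> ((\<forall>k. f j (X t) - f j z \<le> f k (X t) - f k z) \<longrightarrow> D \<le> 0)"
        using energy2_deriv[OF hX rest] t unfolding \<phi>_def by auto
      then obtain D where D: "\<And>j. (\<phi> j has_real_derivative D j) (at t)"
        "\<And>j. (\<forall>k. f j (X t) - f j z \<le> f k (X t) - f k z) \<Longrightarrow> D j \<le> 0" by metis
      have act: "D j \<le> 0" if "\<phi> j t = Min (range (\<lambda>k. \<phi> k t))" for j
      proof (rule D(2), rule allI)
        fix k
        have "\<phi> j t \<le> \<phi> k t" using that by simp
        then show "f j (X t) - f j z \<le> f k (X t) - f k z" unfolding \<phi>_def by simp
      qed
      show "\<forall>\<epsilon>>0. \<exists>d>0. \<forall>u w. t - d < u \<longrightarrow> u \<le> t \<longrightarrow> t \<le> w \<longrightarrow> w < t + d \<longrightarrow>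
     Min (range (\<lambda>j. exp w * (f j (X w) - f j z + gam w / 2 * (norm (Z w - z))\<^sup>2))) - Min (range (\<lambda>j. exp u * (f j (X u) - f j z + gam u / 2 * (norm (Z u - z))\<^sup>2))) \<le> \<epsilon> * (w - u)"
        using cond_of_eventually[OF min_cond[OF D(1) act]] unfolding \<phi>_def by simp
    qed
  qed
qed

lemma merit_decay:
  assumes T: "T \<ge> 0"
  shows "merit f (X T) z \<le> exp (- T) * (merit f x0 z + \<gamma>0 / 2 * (norm (x0 + x1 - z))\<^sup>2)"
proof -
  have "Min (range (\<lambda>j. exp T * (f j (X T) - f j z + gam T / 2 * (norm (Z T - z))\<^sup>2)))
      = exp T * (merit f (X T) z + gam T / 2 * (norm (Z T - z))\<^sup>2)"
    unfolding merit_def by (rule Min_affine) simp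
  moreover have "Min (range (\<lambda>j. exp 0 * (f j (X 0) - f j z + gam 0 / 2 * (norm (Z 0 - z))\<^sup>2)))
      = exp 0 * (merit f x0 z + \<gamma>0 / 2 * (norm (x0 + x1 - z))\<^sup>2)"
    unfolding merit_def X0 Z0 gam0 by (rule Min_affine) simp
  ultimately have "exp T * (merit f (X T) z + gam T / 2 * (norm (Z T - z))\<^sup>2) \<le> merit f x0 z + \<gamma>0 / 2 * (norm (x0 + x1 - z))\<^sup>2"
    using E2_mono[OF T, of z] by simp
  moreover have "exp T * merit f (X T) z \<le> exp T * (merit f (X T) z + gam T / 2 * (norm (Z T - z))\<^sup>2)"
    using gam_nn[OF T] by (intro mult_left_mono) auto
  ultimately have "exp T * merit f (X T) z \<le> merit f x0 z + \<gamma>0 / 2 * (norm (x0 + x1 - z))\<^sup>2" by linarith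
  then show ?thesis by (simp add: exp_minus field_simps)
qed

end

lemma Min_range_mono:
  fixes a b :: "'i::finite \<Rightarrow> real"
  assumes "\<And>j. a j \<le> b j"
  shows "Min (range a) \<le> Min (range b)"
proof -
  have "Min (range b) \<in> range b" by (rule Min_in) auto
  then obtain k where k: "Min (range b) = b k" by blast
  have "Min (range a) \<le> a k" by simp
  then show ?thesis using k assms[of k] by linarith
qed

lemma sq_sum_le: "(a + b)\<^sup>2 \<le> 2 * a\<^sup>2 + 2 * (b::real)\<^sup>2"
proof -
  have "(a + b)\<^sup>2 + (a - b)\<^sup>2 = 2 * a\<^sup>2 + 2 * b\<^sup>2" by (simp add: power2_eq_square algebra_simps)
  moreover have "(a - b)\<^sup>2 \<ge> 0" by simp
  ultimately show ?thesis by linarith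
qed

lemma eps_lim:
  fixes m a b s :: real
  assumes H: "\<And>\<epsilon>. \<epsilon> > 0 \<Longrightarrow> m \<le> a + b * (s + \<epsilon>)\<^sup>2" and b: "b \<ge> 0" and s: "s \<ge> 0"
  shows "m \<le> a + b * s\<^sup>2"
proof (rule field_le_epsilon)
  fix \<delta> :: real assume \<delta>: "\<delta> > 0"
  define c where "c = b * (2 * s + 1) + 1"
  have c: "c > 0" using b s by (simp add: c_def add_nonneg_pos)
  define \<epsilon> where "\<epsilon> = min 1 (\<delta> / c)"
  have \<epsilon>: "\<epsilon> > 0" "\<epsilon> \<le> 1" "\<epsilon> \<le> \<delta> / c" using \<delta> c by (auto simp: \<epsilon>_def)
  have "\<epsilon> * c \<le> \<delta>" using \<epsilon>(3) c by (simp add: le_divide_eq)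
  have sq: "(s + \<epsilon>)\<^sup>2 \<le> s\<^sup>2 + \<epsilon> * (2 * s + 1)"
  proof -
    have "\<epsilon> * \<epsilon> \<le> \<epsilon> * 1" using \<epsilon> by (intro mult_left_mono) auto
    then show ?thesis by (simp add: power2_eq_square algebra_simps)
  qed
  have "b * (s + \<epsilon>)\<^sup>2 \<le> b * (s\<^sup>2 + \<epsilon> * (2 * s + 1))" using sq b by (rule mult_left_mono)
  also have "\<dots> = b * s\<^sup>2 + \<epsilon> * (b * (2 * s + 1))" by (simp add: algebra_simps)
  also have "\<epsilon> * (b * (2 * s + 1)) \<le> \<epsilon> * c" using \<epsilon> by (simp add: c_def)
  finally have "b * (s + \<epsilon>)\<^sup>2 \<le> b * s\<^sup>2 + \<delta>" using \<open>\<epsilon> * c \<le> \<delta>\<close> by linarith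
  then show "m \<le> a + b * s\<^sup>2 + \<delta>" using H[OF \<epsilon>(1)] by linarith
qed

theorem mainTheorem8:
  fixes f :: "'i::finite \<Rightarrow> 'a::euclidean_space \<Rightarrow> real"
    and g :: "'i \<Rightarrow> 'a \<Rightarrow> 'a"
    and \<mu>s Ls :: "'i \<Rightarrow> real"
    and \<gamma>0 :: real and x0 x1 :: 'a
    and X Z :: "real \<Rightarrow> 'a"
  assumes grad: "\<And>j x. (f j has_derivative (\<lambda>h. g j x \<bullet> h)) (at x)"
    and lip: "\<And>j x y. norm (g j x - g j y) \<le> Ls j * norm (x - y)"
    and sconv: "\<And>j y z. f j z \<ge> f j y + g j y \<bullet> (z - y) + \<mu>s j / 2 * (norm (z - y))\<^sup>2"
    and mu_nonneg: "\<And>j. 0 \<le> \<mu>s j"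
    and mu_le_L: "\<And>j. \<mu>s j \<le> Ls j"
    and A2: "\<exists>j0. \<forall>c. bounded {x. f j0 x \<le> c}"
    and A3: "\<And>x. \<exists>xs \<in> weak_pareto f. \<forall>j. f j xs \<le> f j x"
    and gamma0_pos: "\<gamma>0 > 0"
    and X_ac: "loc_abs_cont_nonneg X"
    and Z_ac: "loc_abs_cont_nonneg Z"
    and X0: "X 0 = x0"
    and Z0: "Z 0 = x0 + x1"
    and ode: "AE t in lborel. t > 0 \<longrightarrow>
        (X has_vector_derivative (Z t - X t)) (at t) \<and>
        (\<exists>Z' v. (Z has_vector_derivative Z') (at t) \<and>
           v \<in> convex hull (range (\<lambda>j. g j (X t))) \<and>
           (\<forall>w \<in> convex hull (range (\<lambda>j. g j (X t))). (X t - Z t) \<bullet> v \<le> (X t - Z t) \<bullet> w) \<and>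
           (Min (range \<mu>s) + (\<gamma>0 - Min (range \<mu>s)) * exp (- t)) *\<^sub>R Z'
              = Min (range \<mu>s) *\<^sub>R (X t - Z t) - v)"
  shows "S_fun f (\<lambda>j. f j x0 + \<gamma>0 / 2 * (norm x1)\<^sup>2) < \<infinity> \<and>
    (\<forall>t>0. u0 f (X t) \<le> ereal (exp (- t)) *
       (u0 f x0 + ereal (\<gamma>0 * (norm (x0 + x1))\<^sup>2
          + \<gamma>0 * (real_of_ereal (S_fun f (\<lambda>j. f j x0 + \<gamma>0 / 2 * (norm x1)\<^sup>2)))\<^sup>2)))"
proof -
  interpret st: setting2 f g \<mu>s Ls \<gamma>0 x0 x1 X Z
    by unfold_locales (fact grad lip sconv mu_nonneg mu_le_L gamma0_pos X_ac Z_ac X0 Z0 ode)+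
  define \<alpha> where "\<alpha> = (\<lambda>j. f j x0 + \<gamma>0 / 2 * (norm x1)\<^sup>2)"
  define Lset where "Lset = weak_pareto f \<inter> level_set f \<alpha>"
  define S where "S = S_fun f \<alpha>"
  have Sdef: "S = (SUP Fs \<in> (\<lambda>x j. f j x) ` Lset. (INF z \<in> {z. (\<lambda>j. f j z) = Fs}. ereal (norm z)))"
    unfolding S_def S_fun_def Lset_def ..
  obtain j0 where j0: "\<And>c. bounded {x. f j0 x \<le> c}" using A2 by blast
  obtain R where R: "\<And>x. f j0 x \<le> \<alpha> j0 \<Longrightarrow> norm x \<le> R" using j0[of "\<alpha> j0"] unfolding bounded_iff by blast
  have Sle: "S \<le> ereal R"
    unfolding Sdef
  proof (rule SUP_least)
    fix Fs assume "Fs \<in> (\<lambda>x j. f j x) ` Lset"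
    then obtain x where x: "x \<in> Lset" "Fs = (\<lambda>j. f j x)" by blast
    have "(INF z \<in> {z. (\<lambda>j. f j z) = Fs}. ereal (norm z)) \<le> ereal (norm x)" by (rule INF_lower) (simp add: x)
    also have "norm x \<le> R" using x(1) R unfolding Lset_def level_set_def by auto
    finally show "(INF z \<in> {z. (\<lambda>j. f j z) = Fs}. ereal (norm z)) \<le> ereal R" by simp
  qed
  have Sfin: "S < \<infinity>" by (rule le_less_trans[OF Sle]) simp
  define Sr where "Sr = real_of_ereal S"
  have approx: "Sr \<ge> 0 \<and> (\<exists>z''. (\<lambda>j. f j z'') = (\<lambda>j. f j x) \<and> norm z'' < Sr + \<epsilon>)" if x: "x \<in> Lset" and \<epsilon>: "\<epsilon> > 0" for x \<epsilon>
  proof -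
    let ?I = "(INF z \<in> {z. (\<lambda>j. f j z) = (\<lambda>j. f j x)}. ereal (norm z))"
    have IS: "?I \<le> S" unfolding Sdef by (rule SUP_upper) (use x in auto)
    have I0: "0 \<le> ?I" by (rule INF_greatest) simp
    then have S0: "0 \<le> S" using IS by simp
    then have Seq: "S = ereal Sr" using Sfin unfolding Sr_def by (cases S) auto
    have "?I < ereal (Sr + \<epsilon>)" using IS Seq \<epsilon> by (simp add: le_less_trans)
    then obtain z'' where "z'' \<in> {z. (\<lambda>j. f j z) = (\<lambda>j. f j x)}" "ereal (norm z'') < ereal (Sr + \<epsilon>)"
      by (auto simp: INF_less_iff)
    moreover have "Sr \<ge> 0" using S0 Seq by simp
    ultimately show ?thesis by auto
  qed
  have Seq': "S_fun f (\<lambda>j. f j x0 + \<gamma>0 / 2 * (norm x1)\<^sup>2) = S" by (simp add: S_def \<alpha>_def)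
  show ?thesis
    unfolding Seq'
  proof (intro conjI allI impI)
    show "S < \<infinity>" by (rule Sfin)
    fix t :: real assume t: "t > 0"
    have merit00: "merit f x0 x0 = 0" unfolding merit_def by simp
    have u0x0: "u0 f x0 \<ge> 0"
      unfolding u0_def by (rule SUP_upper2[of x0]) (auto simp: merit00)
    define C where "C = \<gamma>0 * (norm (x0 + x1))\<^sup>2 + \<gamma>0 * Sr\<^sup>2"
    have C0: "C \<ge> 0" using gamma0_pos by (simp add: C_def)
    show "u0 f (X t) \<le> ereal (exp (- t)) * (u0 f x0 + ereal (\<gamma>0 * (norm (x0 + x1))\<^sup>2 + \<gamma>0 * (real_of_ereal S)\<^sup>2))"
      unfolding Sr_def[symmetric] C_def[symmetric]
    proof (cases "u0 f x0 = \<infinity>")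
      case True
      then show "u0 f (X t) \<le> ereal (exp (- t)) * (u0 f x0 + ereal C)" by simp
    next
      case False
      then obtain U where U: "u0 f x0 = ereal U" using u0x0 by (cases "u0 f x0") auto
      have U0: "U \<ge> 0" using u0x0 U by simp
      have meritU: "merit f x0 w \<le> U" for w
      proof -
        have "ereal (merit f x0 w) \<le> u0 f x0" unfolding u0_def by (rule SUP_upper) simp
        then show ?thesis using U by simp
      qed
      have bound: "merit f (X t) z \<le> exp (- t) * (U + C)" for z
      proof (cases "merit f (X t) z \<le> 0")
        case True
        moreover have "0 \<le> exp (- t) * (U + C)" using U0 C0 by simp
        ultimately show ?thesis by linarith
      next
        case False
        obtain z' where z': "z' \<in> weak_pareto f" "\<And>j. f j z' \<le> f j z" using A3[of z] by blast
        have m1: "merit f (X t) z \<le> merit f (X t) z'"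
          unfolding merit_def by (rule Min_range_mono) (use z'(2) in \<open>auto simp: algebra_simps\<close>)
        have pos: "f j z' < f j (X t)" for j
        proof -
          have "merit f (X t) z' \<le> f j (X t) - f j z'" unfolding merit_def by simp
          then show ?thesis using m1 False by linarith
        qed
        have "f j z' \<le> \<alpha> j" for j
        proof -
          have "f j (X t) \<le> f j x0 + \<gamma>0 / 2 * (norm x1)\<^sup>2" using st.level_bound[of t j] t by simp
          then show ?thesis using pos[of j] unfolding \<alpha>_def by linarith
        qed
        then have z'L: "z' \<in> Lset"
          unfolding Lset_def level_set_def using z'(1) by auto
        have epsH: "merit f (X t) z \<le> exp (- t) * (U + \<gamma>0 * (norm (x0 + x1))\<^sup>2) + (exp (- t) * \<gamma>0) * (Sr + \<epsilon>)\<^sup>2"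
          if \<epsilon>: "\<epsilon> > 0" for \<epsilon>
        proof -
          obtain z'' where z'': "(\<lambda>j. f j z'') = (\<lambda>j. f j z')" "norm z'' < Sr + \<epsilon>" and Sr0: "Sr \<ge> 0"
            using approx[OF z'L \<epsilon>] by blast
          have eqm: "merit f w z'' = merit f w z'" for w
            unfolding merit_def using z''(1) by (metis (no_types))
          have "merit f (X t) z \<le> merit f (X t) z''" using m1 eqm by simp
          also have "\<dots> \<le> exp (- t) * (merit f x0 z'' + \<gamma>0 / 2 * (norm (x0 + x1 - z''))\<^sup>2)"
            using st.merit_decay[of t z''] t by simp
          also have "\<dots> \<le> exp (- t) * (U + \<gamma>0 / 2 * (2 * (norm (x0 + x1))\<^sup>2 + 2 * (Sr + \<epsilon>)\<^sup>2))"
          proof -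
            have n1: "norm (x0 + x1 - z'') \<le> norm (x0 + x1) + norm z''" by (rule norm_triangle_ineq4)
            have "(norm (x0 + x1 - z''))\<^sup>2 \<le> (norm (x0 + x1) + norm z'')\<^sup>2"
              using n1 by (intro power_mono) auto
            also have "\<dots> \<le> 2 * (norm (x0 + x1))\<^sup>2 + 2 * (norm z'')\<^sup>2"
              by (rule sq_sum_le)
            also have "(norm z'')\<^sup>2 \<le> (Sr + \<epsilon>)\<^sup>2" using z''(2) by (intro power_mono) auto
            finally have "(norm (x0 + x1 - z''))\<^sup>2 \<le> 2 * (norm (x0 + x1))\<^sup>2 + 2 * (Sr + \<epsilon>)\<^sup>2" by simp
            then have "\<gamma>0 / 2 * (norm (x0 + x1 - z''))\<^sup>2 \<le> \<gamma>0 / 2 * (2 * (norm (x0 + x1))\<^sup>2 + 2 * (Sr + \<epsilon>)\<^sup>2)"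
              using gamma0_pos by (intro mult_left_mono) auto
            then show ?thesis using meritU[of z''] by (intro mult_left_mono) auto
          qed
          also have "\<dots> = exp (- t) * (U + \<gamma>0 * (norm (x0 + x1))\<^sup>2) + (exp (- t) * \<gamma>0) * (Sr + \<epsilon>)\<^sup>2"
            by (simp add: algebra_simps)
          finally show ?thesis .
        qed
        have Sr0: "Sr \<ge> 0" using approx[OF z'L, of 1] by simp
        have g0: "exp (- t) * \<gamma>0 \<ge> 0" using gamma0_pos by simp
        have "merit f (X t) z \<le> exp (- t) * (U + \<gamma>0 * (norm (x0 + x1))\<^sup>2) + (exp (- t) * \<gamma>0) * Sr\<^sup>2"
          by (rule eps_lim[OF epsH g0 Sr0])
        then show ?thesis by (simp add: C_def algebra_simps)
      qed
      have "u0 f (X t) \<le> ereal (exp (- t) * (U + C))"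
        unfolding u0_def by (rule SUP_least) (use bound in simp)
      then show "u0 f (X t) \<le> ereal (exp (- t)) * (u0 f x0 + ereal C)" by (simp add: U)
    qed
  qed
qed

end
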